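(* Let $n\ge2$ and let $A=(a_{ij})_{i,j=1}^n:\mathbb{R}^n\to\mathbb{M}_n$ be a matrix-valued function with Lipschitz continuous coefficients for which there exist $\lambda,\eta>0$ such that: (i) $a_{ij}(x)=a_{ji}(x)$ for every $x$ and all $i,j$; (ii) $a_{ij}(x)\xi_i\zeta_j\le\lambda^{-1}|\xi||\zeta|$ for every $x,\xi,\zeta\in\mathbb{R}^n$; (iii) $a_{ij}(x)\xi_i\xi_j\ge\lambda|\xi|^2$ for every $x,\xi\in\mathbb{R}^n$; (iv) $|\nabla a_{ij}(x)|\le\eta$ for a.e. $x$ and all $i,j$. Define $\mu:\mathbb{R}^n\setminus\{0\}\to[\lambda,\lambda^{-1}]$ and $Z:\mathbb{R}^n\setminus\{0\}\to\mathbb{R}^n$ by $$\mu(x) = \frac{A(x)x\cdot x}{|x|^2},\qquad Z(x) = \frac{A(x)x}{\mu(x)}.$$ If $A(0)=I$, then there exist constants $c_1,c_2,c_3>0$, depending only on $n$ and $\lambda$, such that for every $r>0$ and a.e. $x\in B_r$, $$\left|\operatorname{div}[A(x)x]\,\mu(x)^{-1} - n\right|\le c_1\eta r,\qquad \left|\delta_{ik}-\partial_i Z_k(x)\right|\le c_2\eta r \ \text{ for all } i,k,\qquad |\operatorname{div}Z(x) - n|\le c_3\eta r.$$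
   Context: Summation over repeated indices is used; $\delta_{ik}$ is the Kronecker delta; $B_r$ is the open ball of radius $r$ centered at the origin. *)

theory Defs
  imports "HOL-Analysis.Analysis"
begin

definition vpartial :: "(real^'n \<Rightarrow> real^'n) \<Rightarrow> 'n \<Rightarrow> 'n \<Rightarrow> real^'n \<Rightarrow> real" where
  "vpartial F i k x = (frechet_derivative F (at x) (axis i 1)) $ k"

definition divergence :: "(real^'n \<Rightarrow> real^'n) \<Rightarrow> real^'n \<Rightarrow> real" where
  "divergence F x = (\<Sum>i\<in>UNIV. vpartial F i i x)"

definition mu_fun :: "(real^'n \<Rightarrow> real^'n^'n) \<Rightarrow> real^'n \<Rightarrow> real" where
  "mu_fun A x = ((A x *v x) \<bullet> x) / (norm x)^2"

definition Z_fun :: "(real^'n \<Rightarrow> real^'n^'n) \<Rightarrow> real^'n \<Rightarrow> real^'n" where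
  "Z_fun A x = (1 / mu_fun A x) *\<^sub>R (A x *v x)"

end

theory Submission
  imports Defs
begin


lemma deriv_seq:
  fixes f :: "'a::euclidean_space \<Rightarrow> real"
  assumes "(f has_derivative D) (at u)"
  shows "(\<lambda>n. real (Suc n) * (f (u + (1 / real (Suc n)) *\<^sub>R v) - f u)) \<longlonglongrightarrow> D v"
proof -
  have lin: "linear D" using assms has_derivative_linear by blast
  have "((\<lambda>t. u + t *\<^sub>R v) has_derivative (\<lambda>t. t *\<^sub>R v)) (at 0)"
    by (auto intro!: derivative_eq_intros)
  hence "((\<lambda>t. f (u + t *\<^sub>R v)) has_derivative (\<lambda>t. D (t *\<^sub>R v))) (at 0)"
    using has_derivative_compose[of "\<lambda>t. u + t *\<^sub>R v" _ 0 UNIV f D] assms by (simp add: o_def)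
  moreover have "(\<lambda>t. D (t *\<^sub>R v)) = (*) (D v)"
    using lin by (auto simp: linear_scale)
  ultimately have "((\<lambda>t. f (u + t *\<^sub>R v)) has_field_derivative D v) (at 0)"
    by (simp add: has_field_derivative_def)
  then have L: "((\<lambda>t. (f (u + t *\<^sub>R v) - f u) / t) \<longlongrightarrow> D v) (at 0)"
    by (simp add: has_field_derivative_iff)
  have X: "(\<lambda>n. 1 / real (Suc n)) \<longlonglongrightarrow> 0"
    using LIMSEQ_inverse_real_of_nat by (simp add: inverse_eq_divide)
  have "((\<lambda>t. (f (u + t *\<^sub>R v) - f u) / t) \<circ> (\<lambda>n. 1 / real (Suc n))) \<longlonglongrightarrow> D v"
    using L X unfolding tendsto_at_iff_sequentially by auto
  then show ?thesis by (simp add: o_def mult.commute)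
qed

lemma le_of_eps:
  fixes a b C :: real
  assumes "C \<ge> 0" "\<And>r. r > 0 \<Longrightarrow> a \<le> b + C * r"
  shows "a \<le> b"
proof (rule ccontr)
  assume "\<not> a \<le> b"
  then have d: "a - b > 0" by simp
  define r where "r = (a - b) / (2 * (C + 1))"
  have r: "r > 0" using d assms(1) by (simp add: r_def)
  have "C * r < a - b"
  proof -
    have "C * r \<le> (C + 1) * r" using r by (simp add: mult_right_mono)
    also have "\<dots> = (a - b) / 2" using assms(1) by (simp add: r_def field_simps)
    finally show ?thesis using d by simp
  qed
  then show False using assms(2)[OF r] by simp
qed

lemma box_norm_le:
  fixes z :: "'a::euclidean_space"
  assumes "z \<in> cbox (- (\<rho> *\<^sub>R One)) (\<rho> *\<^sub>R One)"
  shows "norm z \<le> real DIM('a) * \<rho>"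
proof -
  have "\<forall>i\<in>Basis. \<bar>z \<bullet> i\<bar> \<le> \<rho>" using assms by (auto simp: mem_box abs_le_iff)
  then have "(\<Sum>i\<in>Basis. \<bar>z \<bullet> i\<bar>) \<le> (\<Sum>i\<in>(Basis::'a set). \<rho>)"
    by (intro sum_mono) auto
  then show ?thesis using norm_le_l1[of z] by simp
qed

lemma lip_ae_onesided:
  fixes f :: "'a::euclidean_space \<Rightarrow> real"
  assumes lip: "L-lipschitz_on UNIV f"
    and negN: "negligible N"
    and der: "\<And>z. z \<notin> N \<Longrightarrow> \<exists>D. (f has_derivative D) (at z) \<and> (\<forall>h. \<bar>D h\<bar> \<le> eta * norm h)"
    and eta: "eta \<ge> 0"
  shows "f x - f y \<le> eta * norm (x - y)"
proof -
  have L0: "L \<ge> 0" and Lf: "\<And>a b. \<bar>f a - f b\<bar> \<le> L * norm (a - b)"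
    using lip by (auto simp: lipschitz_on_def dist_real_def dist_norm)
  have contf: "continuous_on UNIV f" using lip lipschitz_on_continuous_on by blast
  define v where "v = x - y"
  define nv where "nv = norm v"
  define G where "G m u = real (Suc m) * (f (u + (1 / real (Suc m)) *\<^sub>R v) - f u)" for m u
  define H where "H m u = max 0 (G m u - eta * nv)" for m u
  have contG: "continuous_on UNIV (G m)" for m
    unfolding G_def
    by (intro continuous_intros continuous_on_compose2[OF contf]) auto
  have contH: "continuous_on UNIV (H m)" for m
    unfolding H_def by (intro continuous_intros contG)
  have Gbd: "\<bar>G m u\<bar> \<le> L * nv" for m u
  proof -
    have "\<bar>f (u + (1 / real (Suc m)) *\<^sub>R v) - f u\<bar> \<le> L * (nv / real (Suc m))"
      using Lf[of "u + (1 / real (Suc m)) *\<^sub>R v" u] by (simp add: nv_def)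
    then have "real (Suc m) * \<bar>f (u + (1 / real (Suc m)) *\<^sub>R v) - f u\<bar> \<le> real (Suc m) * (L * (nv / real (Suc m)))"
      by (intro mult_left_mono) auto
    then show ?thesis by (simp add: G_def abs_mult)
  qed
  have Hnn: "0 \<le> H m u" for m u by (simp add: H_def)
  have env: "eta * nv \<ge> 0" using eta by (simp add: nv_def)
  have Hbd: "\<bar>H m u\<bar> \<le> L * nv" for m u
  proof -
    have "G m u \<le> L * nv" "0 \<le> L * nv" using Gbd[of m u] L0 by (auto simp: nv_def)
    then show ?thesis using env by (simp add: H_def)
  qed
  have GH: "G m u \<le> eta * nv + H m u" for m u by (simp add: H_def)
  have Hlim: "(\<lambda>m. H m u) \<longlonglongrightarrow> 0" if uN: "u \<notin> N" for u
  proof -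
    obtain D where D: "(f has_derivative D) (at u)" "\<And>h. \<bar>D h\<bar> \<le> eta * norm h"
      using der[OF uN] by blast
    have "(\<lambda>m. G m u) \<longlonglongrightarrow> D v" unfolding G_def by (rule deriv_seq[OF D(1)])
    then have "(\<lambda>m. H m u) \<longlonglongrightarrow> max 0 (D v - eta * nv)"
      unfolding H_def by (intro tendsto_intros)
    moreover have "max 0 (D v - eta * nv) = 0" using D(2)[of v] by (simp add: nv_def)
    ultimately show ?thesis by simp
  qed
  have key: "f x - f y \<le> eta * nv + (2 * L * real DIM('a)) * \<rho>" if rho: "\<rho> > 0" for \<rho>
  proof -
    define a :: 'a where "a = - (\<rho> *\<^sub>R One)"
    define b :: 'a where "b = \<rho> *\<^sub>R One"
    define K where "K = cbox a b"
    define vol where "vol = Henstock_Kurzweil_Integration.content K"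
    have vol: "vol > 0" unfolding vol_def K_def a_def b_def
      by (rule content_pos_lt) (use rho in auto)
    define I where "I c = integral K (\<lambda>z. f (c + z))" for c
    have intf: "(\<lambda>z. f (c + z)) integrable_on K" for c
      unfolding K_def
      by (intro integrable_continuous continuous_on_compose2[OF contf] continuous_intros) auto
    have claim1: "\<bar>I c - vol * f c\<bar> \<le> L * real DIM('a) * \<rho> * vol" for c
    proof -
      have eq: "I c - vol * f c = integral K (\<lambda>z. f (c + z) - f c)"
        unfolding I_def vol_def K_def
        by (subst integral_diff) (use intf[unfolded K_def] in auto)
      have bd: "\<bar>f (c + z) - f c\<bar> \<le> L * real DIM('a) * \<rho>" if "z \<in> K" for z
      proof -
        have "\<bar>f (c + z) - f c\<bar> \<le> L * norm z" using Lf[of "c + z" c] by simp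
        also have "\<dots> \<le> L * (real DIM('a) * \<rho>)"
          using box_norm_le[of z \<rho>] that L0 by (intro mult_left_mono) (auto simp: K_def a_def b_def)
        finally show ?thesis by simp
      qed
      have i2: "(\<lambda>z. f (c + z) - f c) integrable_on K"
        using intf[of c] by (intro integrable_diff) (auto simp: K_def)
      have "integral K (\<lambda>z. f (c + z) - f c) \<le> integral K (\<lambda>z. L * real DIM('a) * \<rho>)"
        using bd by (intro integral_le i2) (auto simp: K_def abs_le_iff)
      moreover have "integral K (\<lambda>z. - (L * real DIM('a) * \<rho>)) \<le> integral K (\<lambda>z. f (c + z) - f c)"
      proof (intro integral_le i2)
        fix z assume "z \<in> K"
        from bd[OF this] show "- (L * real DIM('a) * \<rho>) \<le> f (c + z) - f c" by linarith
      qed (auto simp: K_def)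
      ultimately show ?thesis unfolding eq by (auto simp: K_def vol_def abs_le_iff algebra_simps)
    qed
    define R where "R = norm y + nv + \<rho>"
    define S where "S = cbox (- (R *\<^sub>R One)) (R *\<^sub>R One :: 'a)"
    have intH: "H m integrable_on cbox p q" for m p q
      by (intro integrable_continuous continuous_on_subset[OF contH]) auto
    have HS: "\<forall>u\<in>S. 0 \<le> H m u" for m using Hnn by auto
    have claim2: "I x - I y \<le> eta * nv * vol + integral S (H m)" for m
    proof -
      define B where "B = eta * nv * vol + integral S (H m)"
      define w where "w = (1 / real (Suc m)) *\<^sub>R v"
      define c where "c k = y + (real k / real (Suc m)) *\<^sub>R v" for k
      have c0: "c 0 = y" by (simp add: c_def)
      have cS: "c (Suc m) = x" by (simp add: c_def v_def)
      have cstep: "c (Suc k) = c k + w" for k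
      proof -
        have "real (Suc k) / real (Suc m) = real k / real (Suc m) + 1 / real (Suc m)"
          by (simp add: add_divide_distrib)
        then show ?thesis by (simp add: c_def w_def scaleR_add_left)
      qed
      have cnorm: "norm (c k) \<le> norm y + nv" if "k \<le> Suc m" for k
      proof -
        have "norm (c k) \<le> norm y + norm ((real k / real (Suc m)) *\<^sub>R v)"
          unfolding c_def by (rule norm_triangle_ineq)
        also have "norm ((real k / real (Suc m)) *\<^sub>R v) = (real k / real (Suc m)) * nv"
          by (simp add: nv_def)
        also have "\<dots> \<le> 1 * nv" using that by (intro mult_right_mono) (auto simp: nv_def)
        finally show ?thesis by simp
      qed
      define J where "J k = integral K (\<lambda>z. G m (c k + z))" for k
      have t1: "I (c (Suc k)) - I (c k) = J k / real (Suc m)" for k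
      proof -
        have "I (c (Suc k)) - I (c k) = integral K (\<lambda>z. f (c k + z + w) - f (c k + z))"
        proof -
          have "I (c k + w) - I (c k) = integral K (\<lambda>z. f (c k + w + z) - f (c k + z))"
            unfolding I_def by (rule integral_diff[OF intf intf, symmetric])
          moreover have "(\<lambda>z. f (c k + w + z) - f (c k + z)) = (\<lambda>z. f (c k + z + w) - f (c k + z))"
            by (simp add: add.assoc add.commute[of w])
          ultimately show ?thesis unfolding cstep by simp
        qed
        moreover have "J k = real (Suc m) * integral K (\<lambda>z. f (c k + z + w) - f (c k + z))"
          unfolding J_def G_def w_def
          by (rule Henstock_Kurzweil_Integration.integral_mult_right)
        ultimately show ?thesis by simp
      qed
      have t2: "J k \<le> B" if k: "k \<le> Suc m" for k
      proof -
        have iG: "(\<lambda>z. G m (c k + z)) integrable_on K"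
          unfolding K_def
          by (intro integrable_continuous continuous_on_compose2[OF contG] continuous_intros) auto
        have iH: "(\<lambda>z. H m (c k + z)) integrable_on K"
          unfolding K_def
          by (intro integrable_continuous continuous_on_compose2[OF contH] continuous_intros) auto
        have "J k \<le> integral K (\<lambda>z. eta * nv + H m (c k + z))"
          unfolding J_def using GH
          by (intro integral_le iG integrable_add iH) (auto simp: K_def)
        also have "\<dots> = eta * nv * vol + integral K (\<lambda>z. H m (c k + z))"
          by (subst integral_add) (use iH in \<open>auto simp: K_def vol_def\<close>)
        also have "integral K (\<lambda>z. H m (c k + z)) = integral (cbox (a + c k) (b + c k)) (H m)"
        proof -
          have "(H m has_integral integral (cbox (a + c k) (b + c k)) (H m)) (cbox (a + c k) (b + c k))"
            by (rule integrable_integral[OF intH])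
          then have "((H m \<circ> (+) (c k)) has_integral integral (cbox (a + c k) (b + c k)) (H m)) (cbox a b)"
            by (simp only: has_integral_shift_cbox_iff)
          then show ?thesis unfolding K_def o_def by (rule integral_unique)
        qed
        also have "\<dots> \<le> integral S (H m)"
        proof (rule integral_subset_le)
          show "cbox (a + c k) (b + c k) \<subseteq> S"
          proof
            fix p assume p: "p \<in> cbox (a + c k) (b + c k)"
            show "p \<in> S" unfolding S_def mem_box
            proof (intro ballI conjI)
              fix i :: 'a assume i: "i \<in> Basis"
              have "\<bar>c k \<bullet> i\<bar> \<le> norm (c k)" using Basis_le_norm[OF i] by simp
              then have ci: "\<bar>c k \<bullet> i\<bar> \<le> norm y + nv" using cnorm[OF k] by linarith
              have "a \<bullet> i + c k \<bullet> i \<le> p \<bullet> i" "p \<bullet> i \<le> b \<bullet> i + c k \<bullet> i"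
                using p i by (auto simp: mem_box inner_add_left)
              moreover have "a \<bullet> i = - \<rho>" "b \<bullet> i = \<rho>" using i by (auto simp: a_def b_def)
              moreover have "(R *\<^sub>R One) \<bullet> i = R" using i by simp
              ultimately show "- (R *\<^sub>R One) \<bullet> i \<le> p \<bullet> i" "p \<bullet> i \<le> (R *\<^sub>R One) \<bullet> i"
                using ci unfolding R_def abs_le_iff inner_minus_left by linarith+
            qed
          qed
        qed (use intH HS in \<open>auto simp: S_def\<close>)
        finally show ?thesis by (simp add: B_def)
      qed
      have "I x - I y = (\<Sum>k<Suc m. I (c (Suc k)) - I (c k))"
        using sum_lessThan_telescope[of "\<lambda>i. I (c i)" "Suc m"] by (simp only: c0 cS)
      also have "\<dots> = (\<Sum>k<Suc m. J k / real (Suc m))" by (simp add: t1)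
      also have "\<dots> \<le> (\<Sum>k<Suc m. B / real (Suc m))"
        by (intro sum_mono divide_right_mono t2) auto
      also have "\<dots> = B" by simp
      finally show ?thesis by (simp add: B_def)
    qed
    have claim3: "(\<lambda>m. integral S (H m)) \<longlonglongrightarrow> 0"
    proof -
      define H' where "H' m u = (if u \<in> N then 0 else H m u)" for m u
      have eqi: "integral S (H m) = integral S (H' m)" for m
        by (rule integral_spike[OF negN]) (auto simp: H'_def)
      have "(\<lambda>m. integral S (H' m)) \<longlonglongrightarrow> integral S (\<lambda>u. 0)"
      proof (rule dominated_convergence(2)[where h="\<lambda>_. L * nv"])
        show "H' m integrable_on S" for m
          unfolding S_def by (rule integrable_spike[OF intH negN]) (auto simp: H'_def)
        show "(\<lambda>_. L * nv) integrable_on S" unfolding S_def by (rule integrable_const)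
        show "norm (H' m u) \<le> L * nv" for m u
          using Hbd[of m u] L0 by (auto simp: H'_def nv_def)
        show "(\<lambda>m. H' m u) \<longlonglongrightarrow> 0" for u
          using Hlim[of u] by (cases "u \<in> N") (auto simp: H'_def)
      qed
      then show ?thesis by (simp add: eqi)
    qed
    have "I x - I y \<le> eta * nv * vol"
    proof (rule LIMSEQ_le[OF tendsto_const])
      show "(\<lambda>m. eta * nv * vol + integral S (H m)) \<longlonglongrightarrow> eta * nv * vol"
        using tendsto_add[OF tendsto_const claim3, of "eta * nv * vol"] by simp
      show "\<exists>M. \<forall>m\<ge>M. I x - I y \<le> eta * nv * vol + integral S (H m)"
        using claim2 by blast
    qed
    moreover have "vol * (eta * nv + (2 * L * real DIM('a)) * \<rho>) = eta * nv * vol + 2 * (L * real DIM('a) * \<rho> * vol)"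
      by (simp add: algebra_simps)
    moreover have "vol * (f x - f y) = vol * f x - vol * f y" by (simp add: algebra_simps)
    ultimately have "vol * (f x - f y) \<le> vol * (eta * nv + (2 * L * real DIM('a)) * \<rho>)"
      using claim1[of x] claim1[of y] unfolding abs_le_iff by linarith
    then show ?thesis using vol by (simp add: mult_le_cancel_left_pos)
  qed
  show ?thesis
    by (rule le_of_eps[of "2 * L * real DIM('a)"]) (use key L0 in \<open>auto simp: nv_def v_def\<close>)
qed



lemma lip_ae:
  fixes f :: "'a::euclidean_space \<Rightarrow> real"
  assumes lip: "L-lipschitz_on UNIV f"
    and negN: "negligible N"
    and der: "\<And>z. z \<notin> N \<Longrightarrow> \<exists>D. (f has_derivative D) (at z) \<and> (\<forall>h. \<bar>D h\<bar> \<le> eta * norm h)"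
    and eta: "eta \<ge> 0"
  shows "\<bar>f x - f y\<bar> \<le> eta * norm (x - y)"
  using lip_ae_onesided[OF assms, of x y] lip_ae_onesided[OF assms, of y x]
  by (auto simp: norm_minus_commute abs_le_iff)

lemma has_derivative_vec_lambda_at:
  fixes g :: "'n::finite \<Rightarrow> 'a::real_normed_vector \<Rightarrow> real"
  assumes "\<And>k. (g k has_derivative g' k) (at x)"
  shows "((\<lambda>y. \<chi> k. g k y) has_derivative (\<lambda>h. \<chi> k. g' k h)) (at x)"
proof -
  have e1: "(\<lambda>y. \<chi> k. g k y) = (\<lambda>y. \<Sum>k\<in>UNIV. g k y *\<^sub>R axis k 1)"
    by (auto simp: vec_eq_iff axis_def if_distrib cong: if_cong)
  have e2: "(\<lambda>h. \<chi> k. g' k h) = (\<lambda>h. \<Sum>k\<in>UNIV. g' k h *\<^sub>R axis k 1)"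
    by (auto simp: vec_eq_iff axis_def if_distrib cong: if_cong)
  show ?thesis unfolding e1 e2
    by (intro has_derivative_sum has_derivative_scaleR_left assms)
qed

lemma mat_bound:
  fixes N :: "real^'n^'n"
  assumes "\<And>i j. \<bar>N$i$j\<bar> \<le> e"
  shows "norm (N *v v) \<le> real CARD('n) ^ 2 * e * norm v"
proof -
  have ci: "\<bar>(N *v v)$i\<bar> \<le> real CARD('n) * e * norm v" for i
  proof -
    have "\<bar>(N *v v)$i\<bar> = \<bar>\<Sum>j\<in>UNIV. N$i$j * v$j\<bar>" by (simp add: matrix_vector_mult_def)
    also have "\<dots> \<le> (\<Sum>j\<in>UNIV. \<bar>N$i$j * v$j\<bar>)" by (rule sum_abs)
    also have "\<dots> \<le> (\<Sum>j\<in>(UNIV::'n set). e * norm v)"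
      by (intro sum_mono) (auto simp: abs_mult intro!: mult_mono assms component_le_norm_cart order_trans[OF abs_ge_zero assms])
    finally show ?thesis by simp
  qed
  have "norm (N *v v) \<le> (\<Sum>i\<in>UNIV. \<bar>(N *v v)$i\<bar>)" by (rule norm_le_l1_cart)
  also have "\<dots> \<le> (\<Sum>i\<in>(UNIV::'n set). real CARD('n) * e * norm v)" by (intro sum_mono ci)
  finally show ?thesis by (simp add: power2_eq_square)
qed



lemma quad_inner:
  fixes M :: "real^'n^'n"
  shows "(\<Sum>i\<in>UNIV. \<Sum>j\<in>UNIV. M $ i $ j * \<xi> $ i * \<zeta> $ j) = \<xi> \<bullet> (M *v \<zeta>)"
  by (simp add: inner_vec_def matrix_vector_mult_def sum_distrib_left mult_ac)

lemma pointwise: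
  fixes A :: "real^'n \<Rightarrow> real^'n^'n" and x :: "real^'n"
  assumes x0: "x \<noteq> 0" and lam: "lam > 0" and eta: "eta \<ge> 0"
    and sym: "\<And>i j. A x $ i $ j = A x $ j $ i"
    and up: "\<And>\<xi> \<zeta>. (\<Sum>i\<in>UNIV. \<Sum>j\<in>UNIV. A x $ i $ j * \<xi> $ i * \<zeta> $ j) \<le> (1 / lam) * norm \<xi> * norm \<zeta>"
    and low: "\<And>\<xi>. (\<Sum>i\<in>UNIV. \<Sum>j\<in>UNIV. A x $ i $ j * \<xi> $ i * \<xi> $ j) \<ge> lam * (norm \<xi>)^2"
    and dev: "\<And>i j. \<bar>A x $ i $ j - mat 1 $ i $ j\<bar> \<le> eta * norm x"
    and der: "\<And>i j. ((\<lambda>y. A y $ i $ j) has_derivative Dd i j) (at x)"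
    and derb: "\<And>i j h. \<bar>Dd i j h\<bar> \<le> eta * norm h"
  defines "K \<equiv> real CARD('n) ^ 2"
  shows "(\<lambda>y. A y *v y) differentiable (at x)
            \<and> Z_fun A differentiable (at x)
            \<and> \<bar>divergence (\<lambda>y. A y *v y) x / mu_fun A x - real CARD('n)\<bar> \<le> (3 * real CARD('n) * K / lam) * eta * norm x
            \<and> (\<forall>i k. \<bar>(if i = k then 1 else 0) - vpartial (Z_fun A) i k x\<bar> \<le> (K * (3 / lam + 5 / lam^3)) * eta * norm x)
            \<and> \<bar>divergence (Z_fun A) x - real CARD('n)\<bar> \<le> (real CARD('n) * (K * (3 / lam + 5 / lam^3))) * eta * norm x"
proof -
  define M where "M = A x"
  define F where "F y = A y *v y" for y
  define Dm where "Dm h = (\<chi> i j. Dd i j h)" for h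
  define F' where "F' h = Dm h *v x + M *v h" for h
  have dF: "(F has_derivative F') (at x)"
  proof -
    have eF: "F = (\<lambda>y. \<chi> k. \<Sum>j\<in>UNIV. A y $ k $ j * y $ j)"
      by (auto simp: F_def matrix_vector_mult_def)
    have "((\<lambda>y. \<chi> k. \<Sum>j\<in>UNIV. A y $ k $ j * y $ j) has_derivative
           (\<lambda>h. \<chi> k. \<Sum>j\<in>UNIV. A x $ k $ j * h $ j + Dd k j h * x $ j)) (at x)"
      by (intro has_derivative_vec_lambda_at has_derivative_sum has_derivative_mult der
            bounded_linear_imp_has_derivative bounded_linear_vec_nth)
    moreover have "(\<lambda>h. \<chi> k. \<Sum>j\<in>UNIV. A x $ k $ j * h $ j + Dd k j h * x $ j) = F'"
      by (auto simp: F'_def Dm_def M_def matrix_vector_mult_def vec_eq_iff sum.distrib)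
    ultimately show ?thesis by (simp add: eF)
  qed
  define s where "s y = y \<bullet> y" for y :: "real^'n"
  define q where "q y = F y \<bullet> y" for y
  define s' where "s' h = 2 * (x \<bullet> h)" for h :: "real^'n"
  define q' where "q' h = F' h \<bullet> x + F x \<bullet> h" for h
  have ds: "(s has_derivative s') (at x)"
    unfolding s_def s'_def
    by (rule derivative_eq_intros | simp add: inner_commute)+
  have dq: "(q has_derivative q') (at x)"
    unfolding q_def q'_def
    by (rule derivative_eq_intros dF | simp add: inner_commute add.commute)+
  have sx: "s x = (norm x)^2" by (simp add: s_def power2_norm_eq_inner)
  have spos: "s x > 0" using x0 by (simp add: sx)
  have quad: "q x = (\<Sum>i\<in>UNIV. \<Sum>j\<in>UNIV. A x $ i $ j * x $ i * x $ j)"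
    by (simp add: quad_inner q_def F_def inner_commute)
  have qlow: "q x \<ge> lam * s x" using low[of x] by (simp add: quad sx)
  have qpos: "q x > 0" using qlow lam spos by (smt (verit) mult_pos_pos)
  have Zeq: "Z_fun A = (\<lambda>y. (s y / q y) *\<^sub>R F y)"
    by (auto simp: Z_fun_def mu_fun_def s_def q_def F_def power2_norm_eq_inner fun_eq_iff)
  have mux: "mu_fun A x = q x / s x"
    by (simp add: mu_fun_def q_def F_def sx)
  define Z' where "Z' h = (s x / q x) *\<^sub>R F' h + ((s' h * q x - s x * q' h) / (q x)^2) *\<^sub>R F x" for h
  have dZ: "(Z_fun A has_derivative Z') (at x)"
    unfolding Zeq
  proof (rule has_derivative_eq_rhs[OF has_derivative_scaleR[OF has_derivative_divide[OF ds dq] dF]])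
    show "q x \<noteq> 0" using qpos by simp
    show "(\<lambda>h. (s x / q x) *\<^sub>R F' h + (- s x * (inverse (q x) * q' h * inverse (q x)) + s' h / q x) *\<^sub>R F x) = Z'"
      using qpos by (auto simp: Z'_def fun_eq_iff field_simps power2_eq_square)
  qed
  have eF: "(\<lambda>y. A y *v y) = F" by (simp add: F_def fun_eq_iff)
  have vpZ: "vpartial (Z_fun A) i k x = Z' (axis i 1) $ k" for i k
    unfolding vpartial_def using frechet_derivative_at[OF dZ] by simp
  have vpF: "vpartial (\<lambda>y. A y *v y) i k x = F' (axis i 1) $ k" for i k
    unfolding vpartial_def eF using frechet_derivative_at[OF dF] by simp
  define c2 where "c2 = K * (3 / lam + 5 / lam^3)"
  define rho where "rho = norm x"
  have rpos: "rho > 0" using x0 by (simp add: rho_def)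
  have sr: "s x = rho^2" by (simp add: sx rho_def)
  have K0: "K \<ge> 0" by (simp add: K_def)
  define G where "G = F x - x"
  have FG: "F x = x + G" by (simp add: G_def)
  have Mx: "F x = M *v x" by (simp add: F_def M_def)
  have Mdev: "\<bar>(M - mat 1) $ i $ j\<bar> \<le> eta * rho" for i j
    using dev[of i j] by (simp add: M_def rho_def)
  have Gm: "G = (M - mat 1) *v x" by (simp add: G_def Mx matrix_vector_mult_diff_rdistrib)
  have normG: "norm G \<le> K * eta * rho^2"
    using mat_bound[of "M - mat 1" "eta * rho" x, OF Mdev] by (simp add: Gm K_def rho_def power2_eq_square mult_ac)
  define E where "E h = (M - mat 1) *v h + Dm h *v x" for h
  have F'E: "F' h = h + E h" for h by (simp add: F'_def E_def matrix_vector_mult_diff_rdistrib)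
  have Dmb: "\<bar>Dm h $ i $ j\<bar> \<le> eta * norm h" for h i j by (simp add: Dm_def derb)
  have normD: "norm (Dm h *v x) \<le> K * eta * rho * norm h" for h
    using mat_bound[of "Dm h" "eta * norm h" x, OF Dmb] by (simp add: K_def rho_def mult_ac)
  have normE: "norm (E h) \<le> 2 * K * eta * rho * norm h" for h
  proof -
    have "norm (E h) \<le> norm ((M - mat 1) *v h) + norm (Dm h *v x)" unfolding E_def by (rule norm_triangle_ineq)
    moreover have "norm ((M - mat 1) *v h) \<le> K * eta * rho * norm h"
      using mat_bound[of "M - mat 1" "eta * rho" h, OF Mdev] by (simp add: K_def mult_ac)
    ultimately show ?thesis using normD[of h] by simp
  qed
  have symM: "(M *v h) \<bullet> x = F x \<bullet> h" for h
  proof -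
    have "(M *v h) \<bullet> x = x \<bullet> (M *v h)" by (simp add: inner_commute)
    also have "\<dots> = (\<Sum>i\<in>UNIV. \<Sum>j\<in>UNIV. M $ i $ j * x $ i * h $ j)" by (simp add: quad_inner)
    also have "\<dots> = (\<Sum>j\<in>UNIV. \<Sum>i\<in>UNIV. M $ j $ i * h $ j * x $ i)"
      by (subst sum.swap) (simp add: M_def sym mult_ac)
    also have "\<dots> = h \<bullet> (M *v x)" by (simp add: quad_inner)
    finally show ?thesis by (simp add: Mx inner_commute)
  qed
  have q'eq: "q' h = 2 * (F x \<bullet> h) + (Dm h *v x) \<bullet> x" for h
    by (simp add: q'_def F'_def inner_add_left symM)
  have qeq: "q x = s x + G \<bullet> x" by (simp add: q_def s_def FG inner_add_left)
  have Gx: "\<bar>G \<bullet> x\<bar> \<le> K * eta * rho^3"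
  proof -
    have "\<bar>G \<bullet> x\<bar> \<le> norm G * norm x" by (rule Cauchy_Schwarz_ineq2)
    also have "\<dots> \<le> (K * eta * rho^2) * rho" using normG by (simp add: rho_def mult_right_mono)
    finally show ?thesis by (simp add: power2_eq_square power3_eq_cube mult_ac)
  qed
  have qlow': "q x \<ge> lam * rho^2" using qlow by (simp add: sr)
  have normF: "norm (F x) \<le> rho / lam"
  proof (cases "F x = 0")
    case True then show ?thesis using rpos lam by simp
  next
    case False
    have "(norm (F x))^2 = F x \<bullet> (M *v x)" by (simp add: Mx power2_norm_eq_inner)
    also have "\<dots> = (\<Sum>i\<in>UNIV. \<Sum>j\<in>UNIV. A x $ i $ j * F x $ i * x $ j)" by (simp add: quad_inner M_def)
    also have "\<dots> \<le> (1 / lam) * norm (F x) * rho" using up by (simp add: rho_def)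
    finally have "norm (F x) * norm (F x) \<le> norm (F x) * (rho / lam)" by (simp add: power2_eq_square mult_ac)
    then show ?thesis using False by (meson mult_le_cancel_left_pos zero_less_norm_iff)
  qed
  define N where "N h = s' h * q x - s x * q' h" for h
  have Neq: "N h = 2 * (x \<bullet> h) * (G \<bullet> x) - 2 * s x * (G \<bullet> h) - s x * ((Dm h *v x) \<bullet> x)" for h
    by (simp add: N_def s'_def q'eq qeq FG inner_add_left algebra_simps inner_commute)
  have normN: "\<bar>N h\<bar> \<le> 5 * K * eta * rho^4 * norm h" for h
  proof -
    have a1: "\<bar>x \<bullet> h\<bar> \<le> rho * norm h" unfolding rho_def by (rule Cauchy_Schwarz_ineq2)
    have a2: "\<bar>G \<bullet> h\<bar> \<le> K * eta * rho^2 * norm h"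
    proof -
      have "\<bar>G \<bullet> h\<bar> \<le> norm G * norm h" by (rule Cauchy_Schwarz_ineq2)
      also have "\<dots> \<le> (K * eta * rho^2) * norm h" using normG by (simp add: mult_right_mono)
      finally show ?thesis .
    qed
    have a3: "\<bar>(Dm h *v x) \<bullet> x\<bar> \<le> (K * eta * rho * norm h) * rho"
    proof -
      have "\<bar>(Dm h *v x) \<bullet> x\<bar> \<le> norm (Dm h *v x) * norm x" by (rule Cauchy_Schwarz_ineq2)
      also have "\<dots> \<le> (K * eta * rho * norm h) * rho" using normD[of h] by (simp add: rho_def mult_right_mono)
      finally show ?thesis .
    qed
    have KE: "K * eta \<ge> 0" using K0 eta by simp
    have t1: "\<bar>2 * (x \<bullet> h) * (G \<bullet> x)\<bar> \<le> 2 * ((rho * norm h) * (K * eta * rho^3))"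
    proof -
      have "\<bar>2 * (x \<bullet> h) * (G \<bullet> x)\<bar> = 2 * (\<bar>x \<bullet> h\<bar> * \<bar>G \<bullet> x\<bar>)" by (simp add: abs_mult)
      also have "\<dots> \<le> 2 * ((rho * norm h) * (K * eta * rho^3))"
        using a1 Gx by (intro mult_left_mono mult_mono) (auto simp: rpos KE)
      finally show ?thesis .
    qed
    have t2: "\<bar>2 * s x * (G \<bullet> h)\<bar> \<le> 2 * (rho^2 * (K * eta * rho^2 * norm h))"
    proof -
      have "\<bar>2 * s x * (G \<bullet> h)\<bar> = 2 * (rho^2 * \<bar>G \<bullet> h\<bar>)" by (simp add: abs_mult sr)
      also have "\<dots> \<le> 2 * (rho^2 * (K * eta * rho^2 * norm h))"
        using a2 by (intro mult_left_mono) auto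
      finally show ?thesis .
    qed
    have t3: "\<bar>s x * ((Dm h *v x) \<bullet> x)\<bar> \<le> rho^2 * ((K * eta * rho * norm h) * rho)"
    proof -
      have "\<bar>s x * ((Dm h *v x) \<bullet> x)\<bar> = rho^2 * \<bar>(Dm h *v x) \<bullet> x\<bar>" by (simp add: abs_mult sr)
      also have "\<dots> \<le> rho^2 * ((K * eta * rho * norm h) * rho)"
        using a3 by (intro mult_left_mono) auto
      finally show ?thesis .
    qed
    have "\<bar>N h\<bar> \<le> 2 * ((rho * norm h) * (K * eta * rho^3)) + 2 * (rho^2 * (K * eta * rho^2 * norm h)) + rho^2 * ((K * eta * rho * norm h) * rho)"
      unfolding Neq using t1 t2 t3 by linarith
    also have "\<dots> = 5 * K * eta * rho^4 * norm h" by (simp add: eval_nat_numeral algebra_simps)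
    finally show ?thesis .
  qed
  have Zdec: "Z' h - h = ((s x - q x) / q x) *\<^sub>R h + (s x / q x) *\<^sub>R E h + (N h / (q x)^2) *\<^sub>R F x" for h
    using qpos by (simp add: Z'_def N_def F'E algebra_simps diff_divide_distrib scaleR_diff_left)
  have lr: "lam * rho^2 > 0" using lam rpos by simp
  have sq_le: "s x / q x \<le> 1 / lam"
  proof -
    have "s x / q x \<le> s x / (lam * rho^2)"
      using qlow' lr spos by (intro divide_left_mono) auto
    also have "\<dots> = 1 / lam" using rpos lam by (simp add: sr)
    finally show ?thesis .
  qed
  have sq_nn: "s x / q x \<ge> 0" using spos qpos by simp
  have main2: "norm (Z' h - h) \<le> c2 * eta * norm x * norm h" for h
  proof -
    have n1: "norm (((s x - q x) / q x) *\<^sub>R h) \<le> (K * eta * rho / lam) * norm h"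
    proof -
      have "\<bar>s x - q x\<bar> / q x \<le> (K * eta * rho^3) / q x"
        using Gx qpos qeq by (intro divide_right_mono) auto
      also have "\<dots> \<le> (K * eta * rho^3) / (lam * rho^2)"
        using qlow' lr K0 eta rpos by (intro divide_left_mono) auto
      also have "\<dots> = K * eta * rho / lam" using rpos lam by (simp add: eval_nat_numeral field_simps)
      finally have "\<bar>s x - q x\<bar> / q x \<le> K * eta * rho / lam" .
      then have AA: "\<bar>s x - q x\<bar> / q x * norm h \<le> K * eta * rho / lam * norm h"
        by (rule mult_right_mono) simp
      have BB: "\<bar>(s x - q x) / q x\<bar> = \<bar>s x - q x\<bar> / q x"
        using qpos by simp
      show ?thesis unfolding norm_scaleR BB by (rule AA)
    qed
    have n2: "norm ((s x / q x) *\<^sub>R E h) \<le> (1 / lam) * (2 * K * eta * rho * norm h)"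
    proof -
      have "norm ((s x / q x) *\<^sub>R E h) = (s x / q x) * norm (E h)"
        using sq_nn by (simp only: norm_scaleR abs_of_nonneg)
      also have "\<dots> \<le> (1 / lam) * (2 * K * eta * rho * norm h)"
        by (rule mult_mono[OF sq_le normE]) (use lam in auto)
      finally show ?thesis .
    qed
    have n3: "norm ((N h / (q x)^2) *\<^sub>R F x) \<le> (5 * K * eta * norm h / lam^2) * (rho / lam)"
    proof -
      have "\<bar>N h\<bar> / (q x)^2 \<le> (5 * K * eta * rho^4 * norm h) / (q x)^2"
        using normN[of h] by (intro divide_right_mono) auto
      also have "\<dots> \<le> (5 * K * eta * rho^4 * norm h) / (lam * rho^2)^2"
        using qlow' lr K0 eta rpos mult_pos_pos[OF zero_less_power[OF qpos, of 2] zero_less_power[OF lr, of 2]]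
        by (intro divide_left_mono power_mono) auto
      also have "\<dots> = 5 * K * eta * norm h / lam^2" using rpos lam by (simp add: eval_nat_numeral field_simps)
      finally have r: "\<bar>N h\<bar> / (q x)^2 \<le> 5 * K * eta * norm h / lam^2" .
      have "norm ((N h / (q x)^2) *\<^sub>R F x) = (\<bar>N h\<bar> / (q x)^2) * norm (F x)"
        by (simp add: abs_div)
      also have "\<dots> \<le> (5 * K * eta * norm h / lam^2) * (rho / lam)"
        using r normF K0 eta by (intro mult_mono) auto
      finally show ?thesis .
    qed
    have "norm (Z' h - h) \<le> norm (((s x - q x) / q x) *\<^sub>R h) + norm ((s x / q x) *\<^sub>R E h) + norm ((N h / (q x)^2) *\<^sub>R F x)"
      unfolding Zdec by (rule order_trans[OF norm_triangle_ineq add_right_mono[OF norm_triangle_ineq]])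
    also have "\<dots> \<le> (K * eta * rho / lam) * norm h + (1 / lam) * (2 * K * eta * rho * norm h) + (5 * K * eta * norm h / lam^2) * (rho / lam)"
      using n1 n2 n3 by linarith
    also have "\<dots> = c2 * eta * norm x * norm h"
      using lam by (simp add: c2_def rho_def field_simps power3_eq_cube power2_eq_square)
    finally show ?thesis .
  qed
  have main1: "\<bar>(\<Sum>i\<in>UNIV. F' (axis i 1) $ i) / (q x / s x) - real CARD('n)\<bar> \<le> (3 * real CARD('n) * K / lam) * eta * norm x"
  proof -
    define t where "t = (\<Sum>i\<in>UNIV. E (axis i 1) $ i)"
    define n where "n = real CARD('n)"
    have n0: "n \<ge> 0" by (simp add: n_def)
    have st: "(\<Sum>i\<in>UNIV. F' (axis i 1) $ i) = n + t"
      by (simp add: F'E t_def n_def sum.distrib axis_def)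
    have tb: "\<bar>t\<bar> \<le> n * (2 * K * eta * rho)"
    proof -
      have "\<bar>t\<bar> \<le> (\<Sum>i\<in>UNIV. \<bar>E (axis i 1) $ i\<bar>)" unfolding t_def by (rule sum_abs)
      also have "\<dots> \<le> (\<Sum>i\<in>(UNIV::'n set). 2 * K * eta * rho)"
      proof (rule sum_mono)
        fix i :: 'n
        show "\<bar>E (axis i 1) $ i\<bar> \<le> 2 * K * eta * rho"
          using order_trans[OF component_le_norm_cart normE[of "axis i 1"]] by (simp add: norm_axis_1)
      qed
      finally show ?thesis by (simp add: n_def)
    qed
    have eq: "(n + t) / (q x / s x) - n = (s x * t + n * (s x - q x)) / q x"
      using qpos spos by (simp add: field_simps)
    have num: "\<bar>s x * t + n * (s x - q x)\<bar> \<le> 3 * n * K * eta * rho^3"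
    proof -
      have "\<bar>s x * t\<bar> \<le> rho^2 * (n * (2 * K * eta * rho))"
        unfolding abs_mult sr using tb by (simp add: mult_left_mono)
      moreover have "\<bar>n * (s x - q x)\<bar> \<le> n * (K * eta * rho^3)"
        unfolding abs_mult using Gx qeq n0 by (simp add: mult_left_mono)
      moreover have "rho^2 * (n * (2 * K * eta * rho)) + n * (K * eta * rho^3) = 3 * n * K * eta * rho^3"
        by (simp add: eval_nat_numeral algebra_simps)
      ultimately show ?thesis by (smt (verit) abs_triangle_ineq)
    qed
    have "\<bar>(s x * t + n * (s x - q x)) / q x\<bar> = \<bar>s x * t + n * (s x - q x)\<bar> / q x"
      using qpos by simp
    also have "\<dots> \<le> (3 * n * K * eta * rho^3) / q x"
      using num qpos by (intro divide_right_mono) auto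
    also have "\<dots> \<le> (3 * n * K * eta * rho^3) / (lam * rho^2)"
      using qlow' lr K0 eta rpos n0 by (intro divide_left_mono) auto
    also have "\<dots> = (3 * n * K / lam) * eta * norm x"
      using rpos lam by (simp add: rho_def[symmetric] eval_nat_numeral field_simps)
    finally have "\<bar>(n + t) / (q x / s x) - n\<bar> \<le> (3 * n * K / lam) * eta * norm x" unfolding eq .
    then show ?thesis unfolding st n_def .
  qed
  have comp: "\<bar>(if i = k then 1 else 0) - vpartial (Z_fun A) i k x\<bar> \<le> c2 * eta * norm x" for i k
  proof -
    have "\<bar>(if i = k then 1 else 0) - vpartial (Z_fun A) i k x\<bar> = \<bar>(Z' (axis i 1) - axis i 1) $ k\<bar>"
      by (simp add: vpZ axis_def abs_minus_commute)
    also have "\<dots> \<le> norm (Z' (axis i 1) - axis i 1)" by (rule component_le_norm_cart)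
    also have "\<dots> \<le> c2 * eta * norm x" using main2[of "axis i 1"] by (simp add: norm_axis_1)
    finally show ?thesis .
  qed
  have divZ: "\<bar>divergence (Z_fun A) x - real CARD('n)\<bar> \<le> (real CARD('n) * c2) * eta * norm x"
  proof -
    have "divergence (Z_fun A) x - real CARD('n) = (\<Sum>i\<in>UNIV. vpartial (Z_fun A) i i x - 1)"
      by (simp add: divergence_def sum_subtractf)
    also have "\<bar>\<dots>\<bar> \<le> (\<Sum>i\<in>UNIV. \<bar>vpartial (Z_fun A) i i x - 1\<bar>)" by (rule sum_abs)
    also have "\<dots> \<le> (\<Sum>i\<in>(UNIV::'n set). c2 * eta * norm x)"
      using comp by (intro sum_mono) (metis (full_types) abs_minus_commute)
    finally show ?thesis by simp
  qed
  have divF: "\<bar>divergence (\<lambda>y. A y *v y) x / mu_fun A x - real CARD('n)\<bar> \<le> (3 * real CARD('n) * K / lam) * eta * norm x"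
    using main1 by (simp add: divergence_def vpF mux)
  show ?thesis
    using dF dZ divF comp divZ eF unfolding c2_def differentiable_def by blast
qed



theorem lemma4p1:
  fixes lam :: real
  assumes "CARD('n) \<ge> 2" and "lam > 0"
  shows "\<exists>c1 c2 c3. c1 > 0 \<and> c2 > 0 \<and> c3 > 0 \<and>
    (\<forall>(A :: real^'n \<Rightarrow> real^'n^'n) (eta :: real).
      eta > 0
      \<and> (\<forall>i j. \<exists>L. L-lipschitz_on UNIV (\<lambda>x. A x $ i $ j))
      \<and> (\<forall>x i j. A x $ i $ j = A x $ j $ i)
      \<and> (\<forall>x \<xi> \<zeta>. (\<Sum>i\<in>UNIV. \<Sum>j\<in>UNIV. A x $ i $ j * \<xi> $ i * \<zeta> $ j) \<le> (1 / lam) * norm \<xi> * norm \<zeta>)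
      \<and> (\<forall>x \<xi>. (\<Sum>i\<in>UNIV. \<Sum>j\<in>UNIV. A x $ i $ j * \<xi> $ i * \<xi> $ j) \<ge> lam * (norm \<xi>)^2)
      \<and> (AE x in lebesgue. \<forall>i j. \<exists>D. ((\<lambda>y. A y $ i $ j) has_derivative D) (at x)
                                       \<and> (\<forall>h. \<bar>D h\<bar> \<le> eta * norm h))
      \<and> A 0 = mat 1
      \<longrightarrow> (\<forall>r > 0. AE x in lebesgue. x \<in> ball 0 r \<longrightarrow>
            (\<lambda>y. A y *v y) differentiable (at x)
            \<and> Z_fun A differentiable (at x)
            \<and> \<bar>divergence (\<lambda>y. A y *v y) x / mu_fun A x - real CARD('n)\<bar> \<le> c1 * eta * r
            \<and> (\<forall>i k. \<bar>(if i = k then 1 else 0) - vpartial (Z_fun A) i k x\<bar> \<le> c2 * eta * r)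
            \<and> \<bar>divergence (Z_fun A) x - real CARD('n)\<bar> \<le> c3 * eta * r))"
proof -
  have lam: "lam > 0" by (rule assms(2))
  define K where "K = real CARD('n) ^ 2"
  define c1 where "c1 = 3 * real CARD('n) * K / lam"
  define c2 where "c2 = K * (3 / lam + 5 / lam^3)"
  define c3 where "c3 = real CARD('n) * c2"
  have K0: "K > 0" by (simp add: K_def)
  have l3: "3 / lam + 5 / lam^3 > 0" using lam by (simp add: add_pos_pos)
  have pos: "c1 > 0" "c2 > 0" "c3 > 0" using lam K0 l3 by (auto simp: c1_def c2_def c3_def)
  show ?thesis
  proof (rule exI[of _ c1], rule exI[of _ c2], rule exI[of _ c3], intro conjI pos allI impI)
    fix A :: "real^'n \<Rightarrow> real^'n^'n" and eta :: real and r :: real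
    assume H: "eta > 0
      \<and> (\<forall>i j. \<exists>L. L-lipschitz_on UNIV (\<lambda>x. A x $ i $ j))
      \<and> (\<forall>x i j. A x $ i $ j = A x $ j $ i)
      \<and> (\<forall>x \<xi> \<zeta>. (\<Sum>i\<in>UNIV. \<Sum>j\<in>UNIV. A x $ i $ j * \<xi> $ i * \<zeta> $ j) \<le> (1 / lam) * norm \<xi> * norm \<zeta>)
      \<and> (\<forall>x \<xi>. (\<Sum>i\<in>UNIV. \<Sum>j\<in>UNIV. A x $ i $ j * \<xi> $ i * \<xi> $ j) \<ge> lam * (norm \<xi>)^2)
      \<and> (AE x in lebesgue. \<forall>i j. \<exists>D. ((\<lambda>y. A y $ i $ j) has_derivative D) (at x)
                                       \<and> (\<forall>h. \<bar>D h\<bar> \<le> eta * norm h))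
      \<and> A 0 = mat 1"
    assume r: "r > 0"
    from H have eta: "eta > 0"
      and lip: "\<And>i j. \<exists>L. L-lipschitz_on UNIV (\<lambda>x. A x $ i $ j)"
      and sym: "\<And>x i j. A x $ i $ j = A x $ j $ i"
      and up: "\<And>x \<xi> \<zeta>. (\<Sum>i\<in>UNIV. \<Sum>j\<in>UNIV. A x $ i $ j * \<xi> $ i * \<zeta> $ j) \<le> (1 / lam) * norm \<xi> * norm \<zeta>"
      and low: "\<And>x \<xi>. (\<Sum>i\<in>UNIV. \<Sum>j\<in>UNIV. A x $ i $ j * \<xi> $ i * \<xi> $ j) \<ge> lam * (norm \<xi>)^2"
      and ae: "AE x in lebesgue. \<forall>i j. \<exists>D. ((\<lambda>y. A y $ i $ j) has_derivative D) (at x)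
                                       \<and> (\<forall>h. \<bar>D h\<bar> \<le> eta * norm h)"
      and A0: "A 0 = mat 1"
      by auto
    obtain N where negN: "negligible N"
      and NP: "{x. \<not> (\<forall>i j. \<exists>D. ((\<lambda>y. A y $ i $ j) has_derivative D) (at x)
                                       \<and> (\<forall>h. \<bar>D h\<bar> \<le> eta * norm h))} \<subseteq> N"
      using ae unfolding eventually_ae_filter_negligible by blast
    have dev: "\<bar>A x $ i $ j - mat 1 $ i $ j\<bar> \<le> eta * norm x" for x i j
    proof -
      obtain L where L: "L-lipschitz_on UNIV (\<lambda>x. A x $ i $ j)" using lip by blast
      have "\<bar>A x $ i $ j - A 0 $ i $ j\<bar> \<le> eta * norm (x - 0)"
      proof (rule lip_ae[OF L negN, of eta x 0])
        fix z assume "z \<notin> N"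
        then show "\<exists>D. ((\<lambda>x. A x $ i $ j) has_derivative D) (at z) \<and> (\<forall>h. \<bar>D h\<bar> \<le> eta * norm h)"
          using NP by blast
      qed (use eta in auto)
      then show ?thesis by (simp add: A0)
    qed
    show "AE x in lebesgue. x \<in> ball 0 r \<longrightarrow>
            (\<lambda>y. A y *v y) differentiable (at x)
            \<and> Z_fun A differentiable (at x)
            \<and> \<bar>divergence (\<lambda>y. A y *v y) x / mu_fun A x - real CARD('n)\<bar> \<le> c1 * eta * r
            \<and> (\<forall>i k. \<bar>(if i = k then 1 else 0) - vpartial (Z_fun A) i k x\<bar> \<le> c2 * eta * r)
            \<and> \<bar>divergence (Z_fun A) x - real CARD('n)\<bar> \<le> c3 * eta * r"
      unfolding eventually_ae_filter_negligible
    proof (intro exI conjI)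
      show "negligible (N \<union> {0})" using negN by simp
      show "{x. \<not> (x \<in> ball 0 r \<longrightarrow>
            (\<lambda>y. A y *v y) differentiable (at x)
            \<and> Z_fun A differentiable (at x)
            \<and> \<bar>divergence (\<lambda>y. A y *v y) x / mu_fun A x - real CARD('n)\<bar> \<le> c1 * eta * r
            \<and> (\<forall>i k. \<bar>(if i = k then 1 else 0) - vpartial (Z_fun A) i k x\<bar> \<le> c2 * eta * r)
            \<and> \<bar>divergence (Z_fun A) x - real CARD('n)\<bar> \<le> c3 * eta * r)} \<subseteq> N \<union> {0}"
      proof (rule subsetI, rule ccontr)
        fix x assume xbad: "x \<in> {x. \<not> (x \<in> ball 0 r \<longrightarrow>
            (\<lambda>y. A y *v y) differentiable (at x)
            \<and> Z_fun A differentiable (at x)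
            \<and> \<bar>divergence (\<lambda>y. A y *v y) x / mu_fun A x - real CARD('n)\<bar> \<le> c1 * eta * r
            \<and> (\<forall>i k. \<bar>(if i = k then 1 else 0) - vpartial (Z_fun A) i k x\<bar> \<le> c2 * eta * r)
            \<and> \<bar>divergence (Z_fun A) x - real CARD('n)\<bar> \<le> c3 * eta * r)}"
        assume "x \<notin> N \<union> {0}"
        then have xN: "x \<notin> N" and x0: "x \<noteq> 0" by auto
        have xr: "norm x < r" using xbad by auto
        have Px: "\<forall>i j. \<exists>D. ((\<lambda>y. A y $ i $ j) has_derivative D) (at x) \<and> (\<forall>h. \<bar>D h\<bar> \<le> eta * norm h)"
          using NP xN by blast
        then obtain Dd where Dd: "\<And>i j. ((\<lambda>y. A y $ i $ j) has_derivative Dd i j) (at x)"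
          and Db: "\<And>i j h. \<bar>Dd i j h\<bar> \<le> eta * norm h"
          by metis
        have PW: "(\<lambda>y. A y *v y) differentiable (at x)
            \<and> Z_fun A differentiable (at x)
            \<and> \<bar>divergence (\<lambda>y. A y *v y) x / mu_fun A x - real CARD('n)\<bar> \<le> c1 * eta * norm x
            \<and> (\<forall>i k. \<bar>(if i = k then 1 else 0) - vpartial (Z_fun A) i k x\<bar> \<le> c2 * eta * norm x)
            \<and> \<bar>divergence (Z_fun A) x - real CARD('n)\<bar> \<le> c3 * eta * norm x"
          unfolding c1_def c2_def c3_def K_def
          by (rule pointwise[OF x0 lam less_imp_le[OF eta] sym up low dev Dd Db])
        have m: "c * eta * norm x \<le> c * eta * r" if "c > 0" for c
          using xr that eta by (intro mult_left_mono) auto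
        have "(\<lambda>y. A y *v y) differentiable (at x)
            \<and> Z_fun A differentiable (at x)
            \<and> \<bar>divergence (\<lambda>y. A y *v y) x / mu_fun A x - real CARD('n)\<bar> \<le> c1 * eta * r
            \<and> (\<forall>i k. \<bar>(if i = k then 1 else 0) - vpartial (Z_fun A) i k x\<bar> \<le> c2 * eta * r)
            \<and> \<bar>divergence (Z_fun A) x - real CARD('n)\<bar> \<le> c3 * eta * r"
          using PW m[OF pos(1)] m[OF pos(2)] m[OF pos(3)] by (meson order_trans)
        then show False using xbad by auto
      qed
    qed
  qed
qed


end
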